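(* Let $M$ be a matroid on the edge set $E$ of a graph $G=(V,E)$, with rank function $r$. Suppose every circuit $C$ of $M$ induces a $2$-connected subgraph $(V(C),C)$ of $G$. Let $X\subseteq E$ be a connected set of $M$. Then $$\sum_{v\in V(X)}\min\{d_B(v): B\text{ a base of }X\}\le 2(r(X)+1)-|V(X)|.$$
   Context: $V(X)$ is the set of vertices incident with edges of $X$. $d_B(v)$ is the number of edges of $B$ incident with $v$. A base of $X$ is a maximal independent subset of $X$. A set $X$ is connected in $M$ if $M|_X$ is connected, i.e. every two distinct elements of $X$ lie in a common circuit contained in $X$. *)

theory Defs
  imports Main
begin

definition matroid :: "'e set \<Rightarrow> ('e set \<Rightarrow> bool) \<Rightarrow> bool" where
  "matroid E indep \<longleftrightarrow>
     finite E \<and>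
     (\<forall>I. indep I \<longrightarrow> I \<subseteq> E) \<and>
     indep {} \<and>
     (\<forall>I J. indep J \<and> I \<subseteq> J \<longrightarrow> indep I) \<and>
     (\<forall>I J. indep I \<and> indep J \<and> card I < card J \<longrightarrow>
        (\<exists>x\<in>J - I. indep (insert x I)))"

definition rank :: "('e set \<Rightarrow> bool) \<Rightarrow> 'e set \<Rightarrow> nat" where
  "rank indep X = Max {card I | I. I \<subseteq> X \<and> indep I}"

definition circuit :: "'e set \<Rightarrow> ('e set \<Rightarrow> bool) \<Rightarrow> 'e set \<Rightarrow> bool" where
  "circuit E indep C \<longleftrightarrow> C \<subseteq> E \<and> \<not> indep C \<and> (\<forall>D. D \<subset> C \<longrightarrow> indep D)"

definition base_of :: "('e set \<Rightarrow> bool) \<Rightarrow> 'e set \<Rightarrow> 'e set \<Rightarrow> bool" where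
  "base_of indep X B \<longleftrightarrow> B \<subseteq> X \<and> indep B \<and>
     (\<forall>B'. B \<subset> B' \<and> B' \<subseteq> X \<longrightarrow> \<not> indep B')"

definition connected_set :: "'e set \<Rightarrow> ('e set \<Rightarrow> bool) \<Rightarrow> 'e set \<Rightarrow> bool" where
  "connected_set E indep X \<longleftrightarrow> X \<subseteq> E \<and>
     (\<forall>e\<in>X. \<forall>f\<in>X. e \<noteq> f \<longrightarrow> (\<exists>C. circuit E indep C \<and> C \<subseteq> X \<and> e \<in> C \<and> f \<in> C))"

section \<open>Graphs: finite loopless multigraphs, edge e has endpoint set ends e\<close>

definition graph :: "'v set \<Rightarrow> 'e set \<Rightarrow> ('e \<Rightarrow> 'v set) \<Rightarrow> bool" where
  "graph V E ends \<longleftrightarrow> finite V \<and> finite E \<and> (\<forall>e\<in>E. ends e \<subseteq> V \<and> card (ends e) = 2)"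

definition Vset :: "('e \<Rightarrow> 'v set) \<Rightarrow> 'e set \<Rightarrow> 'v set" where
  "Vset ends X = (\<Union>e\<in>X. ends e)"

definition deg :: "('e \<Rightarrow> 'v set) \<Rightarrow> 'e set \<Rightarrow> 'v \<Rightarrow> nat" where
  "deg ends B v = card {e\<in>B. v \<in> ends e}"

definition adj :: "('e \<Rightarrow> 'v set) \<Rightarrow> 'e set \<Rightarrow> ('v \<times> 'v) set" where
  "adj ends F = {(u, w). \<exists>e\<in>F. ends e = {u, w}}"

text \<open>The graph (W, F) is connected (assuming edges of F have ends in W).\<close>
definition graph_connected :: "('e \<Rightarrow> 'v set) \<Rightarrow> 'v set \<Rightarrow> 'e set \<Rightarrow> bool" where
  "graph_connected ends W F \<longleftrightarrow>
     (\<forall>u\<in>W. \<forall>w\<in>W. (u, w) \<in> (adj ends F)\<^sup>*)"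

text \<open>2-connected (Diestel): at least 3 vertices, connected, and deleting any vertex
  (with its incident edges) leaves a connected graph.\<close>
definition two_connected :: "('e \<Rightarrow> 'v set) \<Rightarrow> 'v set \<Rightarrow> 'e set \<Rightarrow> bool" where
  "two_connected ends W F \<longleftrightarrow>
     finite W \<and> card W \<ge> 3 \<and> (\<forall>e\<in>F. ends e \<subseteq> W) \<and>
     graph_connected ends W F \<and>
     (\<forall>v\<in>W. graph_connected ends (W - {v}) {e\<in>F. v \<notin> ends e})"

end

theory Submission
  imports Defs
begin


locale mat = fixes E :: "'e set" and indep :: "'e set \<Rightarrow> bool"
  assumes M: "matroid E indep"
begin

lemma finE: "finite E" using M unfolding matroid_def by blast
lemma indep_sub: "indep I \<Longrightarrow> I \<subseteq> E" using M unfolding matroid_def by blast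
lemma indep_fin: "indep I \<Longrightarrow> finite I" using indep_sub finE finite_subset by blast
lemma indep_mono: "indep J \<Longrightarrow> I \<subseteq> J \<Longrightarrow> indep I" using M unfolding matroid_def by blast
lemma indep_empty: "indep {}" using M unfolding matroid_def by blast
lemma augment: "indep I \<Longrightarrow> indep J \<Longrightarrow> card I < card J \<Longrightarrow> \<exists>x\<in>J - I. indep (insert x I)"
  using M unfolding matroid_def by blast

lemma rank_set_fin: "finite {card I | I. I \<subseteq> S \<and> indep I}"
proof -
  have "{card I | I. I \<subseteq> S \<and> indep I} \<subseteq> card ` Pow E" using indep_sub by blast
  thus ?thesis using finE finite_subset by blast
qed

lemma rank_ge: "indep I \<Longrightarrow> I \<subseteq> S \<Longrightarrow> card I \<le> rank indep S"
  unfolding rank_def using rank_set_fin by (intro Max_ge) auto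

lemma rank_obtain: "\<exists>I. I \<subseteq> S \<and> indep I \<and> card I = rank indep S"
proof -
  have "{card I | I. I \<subseteq> S \<and> indep I} \<noteq> {}" using indep_empty by blast
  from Max_in[OF rank_set_fin this] show ?thesis unfolding rank_def by auto
qed

lemma extend: assumes "indep I" "I \<subseteq> S" shows "\<exists>B. base_of indep S B \<and> I \<subseteq> B"
proof -
  let ?A = "{J. I \<subseteq> J \<and> J \<subseteq> S \<and> indep J}"
  have "?A \<subseteq> Pow E" using indep_sub by blast
  hence f: "finite ?A" using finE finite_subset by blast
  have "?A \<noteq> {}" using assms by blast
  from finite_has_maximal[OF f this] obtain m where m: "m \<in> ?A" "\<forall>b\<in>?A. m \<le> b \<longrightarrow> m = b" by blast
  have m1: "I \<subseteq> m" "m \<subseteq> S" "indep m" using m(1) by auto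
  have "base_of indep S m" unfolding base_of_def
  proof (intro conjI allI impI)
    fix B' assume a: "m \<subset> B' \<and> B' \<subseteq> S"
    show "\<not> indep B'"
    proof
      assume "indep B'"
      hence "B' \<in> ?A" using a m1 by auto
      thus False using m(2) a by auto
    qed
  qed (use m1 in auto)
  thus ?thesis using m by blast
qed

lemma base_exists: "\<exists>B. base_of indep S B" using extend[OF indep_empty] by blast

lemma base_card: assumes "base_of indep S B" shows "card B = rank indep S"
proof -
  have B: "B \<subseteq> S" "indep B" "\<forall>B'. B \<subset> B' \<and> B' \<subseteq> S \<longrightarrow> \<not> indep B'"
    using assms unfolding base_of_def by auto
  obtain I where I: "I \<subseteq> S" "indep I" "card I = rank indep S" using rank_obtain by blast
  have "card B \<le> rank indep S" using rank_ge B by blast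
  moreover have "\<not> card B < card I"
  proof
    assume "card B < card I"
    then obtain x where "x \<in> I - B" "indep (insert x B)" using augment B I by blast
    moreover have "B \<subset> insert x B" "insert x B \<subseteq> S" using calculation I B by auto
    ultimately show False using B by blast
  qed
  ultimately show ?thesis using I by linarith
qed

lemma dep_circuit: assumes "\<not> indep D" "D \<subseteq> E" shows "\<exists>C\<subseteq>D. circuit E indep C"
proof -
  let ?A = "{C. C \<subseteq> D \<and> \<not> indep C}"
  have fD: "finite D" using finE assms(2) by (rule finite_subset[rotated])
  have sub: "?A \<subseteq> Pow D" by blast
  have f: "finite ?A" using finite_subset[OF sub] fD by simp
  have ne: "?A \<noteq> {}" using assms by blast
  obtain m where m: "m \<in> ?A" "\<forall>b\<in>?A. b \<le> m \<longrightarrow> m = b"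
    using finite_has_minimal[OF f ne] by blast
  have m1: "m \<subseteq> D" "\<not> indep m" using m(1) by auto
  have "circuit E indep m" unfolding circuit_def
  proof (intro conjI allI impI)
    fix D' assume a: "D' \<subset> m"
    show "indep D'"
    proof (rule ccontr)
      assume "\<not> indep D'"
      hence "D' \<in> ?A" using a m1 by auto
      thus False using m(2) a by auto
    qed
  qed (use m1 assms in auto)
  thus ?thesis using m1 by blast
qed

end


lemma cross:
  assumes "(u, w) \<in> (adj ends F)\<^sup>*" "u \<in> A" "w \<in> B"
    and "\<forall>g\<in>F. ends g \<subseteq> A \<or> ends g \<subseteq> B"
  shows "\<exists>y\<in>A\<inter>B. y = u \<or> (\<exists>g\<in>F. y \<in> ends g)"
proof (rule ccontr)
  assume nc: "\<not> ?thesis"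
  have "\<And>z. (u, z) \<in> (adj ends F)\<^sup>* \<Longrightarrow> z \<in> A \<and> (z = u \<or> (\<exists>g\<in>F. z \<in> ends g))"
  proof -
    fix z assume "(u, z) \<in> (adj ends F)\<^sup>*"
    thus "z \<in> A \<and> (z = u \<or> (\<exists>g\<in>F. z \<in> ends g))"
    proof (induction rule: rtrancl_induct)
      case base then show ?case using assms by blast
    next
      case (step y z)
      from step(2) obtain g where g: "g \<in> F" "ends g = {y, z}" unfolding adj_def by blast
      show ?case
      proof (cases "ends g \<subseteq> A")
        case True then show ?thesis using g by blast
      next
        case False
        hence "ends g \<subseteq> B" using assms(4) g by blast
        hence "y \<in> A \<inter> B" using step g by blast
        then show ?thesis using nc step(3) by blast
      qed
    qed
  qed
  from this[OF assms(1)] assms(3) nc show False by blast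
qed

lemma handshake:
  assumes "finite W" "finite P" "\<forall>g\<in>P. ends g \<subseteq> W \<and> card (ends g) = 2"
  shows "(\<Sum>v\<in>W. card {g\<in>P. v \<in> ends g}) = 2 * card P"
proof -
  have "(\<Sum>v\<in>W. card {g\<in>P. v \<in> ends g}) = (\<Sum>v\<in>W. \<Sum>g\<in>P. if v \<in> ends g then 1 else 0)"
  proof (rule sum.cong)
    fix v show "card {g\<in>P. v \<in> ends g} = (\<Sum>g\<in>P. if v \<in> ends g then 1 else 0)"
      using assms(2) by (subst card_eq_sum, subst sum.inter_filter) auto
  qed simp
  also have "\<dots> = (\<Sum>g\<in>P. \<Sum>v\<in>W. if v \<in> ends g then 1 else 0)" by (rule sum.swap)
  also have "\<dots> = (\<Sum>g\<in>P. 2)"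
  proof (rule sum.cong)
    fix g assume "g \<in> P"
    hence "ends g \<subseteq> W" "card (ends g) = 2" using assms by auto
    hence "W \<inter> ends g = ends g" by blast
    thus "(\<Sum>v\<in>W. if v \<in> ends g then 1 else 0) = (2::nat)"
      using assms(1) \<open>card (ends g) = 2\<close> by (simp add: sum.If_cases)
  qed simp
  finally show ?thesis by simp
qed

lemma sum_max1:
  assumes "finite W" "finite P" "\<forall>g\<in>P. ends g \<subseteq> W \<and> card (ends g) = 2"
  shows "(\<Sum>v\<in>W. max (card {g\<in>P. v \<in> ends g}) 1) = 2 * card P + card W - card (Vset ends P)"
proof -
  have VP: "Vset ends P \<subseteq> W" using assms(3) unfolding Vset_def by blast
  have eq: "max (card {g\<in>P. v \<in> ends g}) 1 = card {g\<in>P. v \<in> ends g} + (if v \<in> W - Vset ends P then 1 else 0)" if "v \<in> W" for v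
  proof -
    have "card {g\<in>P. v \<in> ends g} = 0 \<longleftrightarrow> v \<notin> Vset ends P"
      using assms(2) unfolding Vset_def by auto
    thus ?thesis using that by auto
  qed
  have "(\<Sum>v\<in>W. max (card {g\<in>P. v \<in> ends g}) 1) = (\<Sum>v\<in>W. card {g\<in>P. v \<in> ends g} + (if v \<in> W - Vset ends P then 1 else 0))"
    using eq by (intro sum.cong) auto
  also have "\<dots> = 2 * card P + card (W - Vset ends P)"
    using handshake[OF assms] assms(1) by (simp add: sum.distrib sum.If_cases Int_absorb1 Diff_eq Compl_eq)
  also have "card (W - Vset ends P) = card W - card (Vset ends P)"
    using VP assms(1) by (simp add: card_Diff_subset finite_subset)
  finally show ?thesis using VP assms(1) card_mono by (metis add_diff_assoc)
qed



definition dl :: "('e \<Rightarrow> 'v set) \<Rightarrow> 'v \<Rightarrow> 'e set" where "dl ends v = {g. v \<in> ends g}"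

definition FF :: "('e \<Rightarrow> 'v set) \<Rightarrow> ('e set \<Rightarrow> bool) \<Rightarrow> 'e set \<Rightarrow> int" where
  "FF ends indep Y = (\<Sum>v\<in>Vset ends Y. int (rank indep Y) - int (rank indep (Y - dl ends v)))"

definition good :: "('e \<Rightarrow> 'v set) \<Rightarrow> ('e set \<Rightarrow> bool) \<Rightarrow> 'e set \<Rightarrow> bool" where
  "good ends indep Y \<longleftrightarrow> FF ends indep Y \<le> 2 * (int (rank indep Y) + 1) - int (card (Vset ends Y))"

locale setting = mat E indep for E :: "'e set" and indep +
  fixes V :: "'v set" and ends :: "'e \<Rightarrow> 'v set" and X :: "'e set"
  assumes G: "graph V E ends"
    and C2: "\<And>C. circuit E indep C \<Longrightarrow> two_connected ends (Vset ends C) C"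
    and CX: "connected_set E indep X"
begin

lemma XE: "X \<subseteq> E" using CX unfolding connected_set_def by blast
lemma ends2: "g \<in> E \<Longrightarrow> card (ends g) = 2" using G unfolding graph_def by blast
lemma endsfin: "g \<in> E \<Longrightarrow> finite (ends g)" using ends2 card.infinite by fastforce
lemma finS: "Y \<subseteq> E \<Longrightarrow> finite Y" using finE finite_subset by blast
lemma finVset: "Y \<subseteq> E \<Longrightarrow> finite (Vset ends Y)"
  unfolding Vset_def using finS endsfin by blast

lemma other_end: assumes "g \<in> E" shows "\<exists>u\<in>ends g. u \<noteq> x"
proof (rule ccontr)
  assume "\<not> ?thesis"
  hence "ends g \<subseteq> {x}" by blast
  hence "card (ends g) \<le> 1" using card_mono[of "{x}"] by fastforce
  thus False using ends2[OF assms] by simp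
qed

lemma endsV: "g \<in> S \<Longrightarrow> ends g \<subseteq> Vset ends S" unfolding Vset_def by blast
lemma VsetI: "g \<in> S \<Longrightarrow> x \<in> ends g \<Longrightarrow> x \<in> Vset ends S" unfolding Vset_def by blast
lemma Vset_mono: "S \<subseteq> T \<Longrightarrow> Vset ends S \<subseteq> Vset ends T" unfolding Vset_def by blast

lemma two_common:
  assumes C: "circuit E indep C" and Y: "C \<inter> Y \<noteq> {}" and P: "C - Y \<noteq> {}"
  shows "2 \<le> card (Vset ends (C - Y) \<inter> Vset ends Y)"
proof -
  have CE: "C \<subseteq> E" using C unfolding circuit_def by blast
  have tc: "two_connected ends (Vset ends C) C" using C2[OF C] .
  have gc: "graph_connected ends (Vset ends C) C" using tc unfolding two_connected_def by blast
  have gcx: "\<And>x. x \<in> Vset ends C \<Longrightarrow> graph_connected ends (Vset ends C - {x}) {g\<in>C. x \<notin> ends g}"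
    using tc unfolding two_connected_def by blast
  define A where "A = Vset ends (C - Y)"
  define B where "B = Vset ends (C \<inter> Y)"
  obtain p where p: "p \<in> C - Y" using P by blast
  obtain e where e: "e \<in> C \<inter> Y" using Y by blast
  have pE: "p \<in> E" "e \<in> E" using p e CE by auto
  have edges: "\<forall>g\<in>F. ends g \<subseteq> A \<or> ends g \<subseteq> B" if "F \<subseteq> C" for F
  proof
    fix g assume "g \<in> F" hence "g \<in> C - Y \<or> g \<in> C \<inter> Y" using that by blast
    thus "ends g \<subseteq> A \<or> ends g \<subseteq> B" unfolding A_def B_def using endsV by metis
  qed
  obtain u where u: "u \<in> ends p" using other_end[OF pE(1)] by blast
  obtain w where w: "w \<in> ends e" using other_end[OF pE(2)] by blast
  have uA: "u \<in> A" unfolding A_def using VsetI[OF p u] .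
  have wB: "w \<in> B" unfolding B_def using VsetI[OF e w] .
  have uV: "u \<in> Vset ends C" using VsetI[of p C u] p u by blast
  have wV: "w \<in> Vset ends C" using VsetI[of e C w] e w by blast
  have "(u, w) \<in> (adj ends C)\<^sup>*" using gc uV wV unfolding graph_connected_def by blast
  from cross[OF this uA wB edges[OF order_refl]] obtain x where x: "x \<in> A \<inter> B" by blast
  have xV: "x \<in> Vset ends C" using x Vset_mono[of "C - Y" C] unfolding A_def by blast
  obtain u' where u': "u' \<in> ends p" "u' \<noteq> x" using other_end[OF pE(1)] by blast
  obtain w' where w': "w' \<in> ends e" "w' \<noteq> x" using other_end[OF pE(2)] by blast
  have uA': "u' \<in> A" unfolding A_def using VsetI[OF p u'(1)] .
  have wB': "w' \<in> B" unfolding B_def using VsetI[OF e w'(1)] .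
  have uV': "u' \<in> Vset ends C - {x}" using VsetI[of p C u'] p u' by blast
  have wV': "w' \<in> Vset ends C - {x}" using VsetI[of e C w'] e w' by blast
  have "(u', w') \<in> (adj ends {g\<in>C. x \<notin> ends g})\<^sup>*"
    using gcx[OF xV] uV' wV' unfolding graph_connected_def by blast
  from cross[OF this uA' wB' edges] obtain y where
    y: "y \<in> A \<inter> B" "y = u' \<or> (\<exists>g\<in>{g\<in>C. x \<notin> ends g}. y \<in> ends g)"
    by blast
  have "y \<noteq> x" using y(2) u'(2) by blast
  have BY: "B \<subseteq> Vset ends Y" unfolding B_def by (rule Vset_mono) blast
  have "{x, y} \<subseteq> A \<inter> Vset ends Y" using x y BY by blast
  moreover have "finite (A \<inter> Vset ends Y)" unfolding A_def using finVset[of "C - Y"] CE by blast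
  ultimately have "card {x, y} \<le> card (A \<inter> Vset ends Y)" by (rule card_mono[rotated])
  thus ?thesis using \<open>y \<noteq> x\<close> unfolding A_def by simp
qed

lemma ear_step:
  assumes YX: "Y \<subseteq> X" and Yne: "Y \<noteq> {}" and YnX: "Y \<noteq> X" and gY: "good ends indep Y"
  shows "\<exists>Y'. Y \<subset> Y' \<and> Y' \<subseteq> X \<and> good ends indep Y'"
proof -
  obtain e where e: "e \<in> Y" using Yne by blast
  obtain f where f: "f \<in> X" "f \<notin> Y" using YX YnX by blast
  have "e \<noteq> f" using e f by blast
  then obtain C0 where C0: "circuit E indep C0" "C0 \<subseteq> X" "e \<in> C0" "f \<in> C0"
    using CX e f YX unfolding connected_set_def by blast
  define Pr where "Pr C \<longleftrightarrow> circuit E indep C \<and> C \<subseteq> X \<and> C \<inter> Y \<noteq> {} \<and> C - Y \<noteq> {}" for C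
  have "Pr C0" unfolding Pr_def using C0 e f by blast
  then obtain C where PC: "Pr C" and min: "\<forall>D. Pr D \<longrightarrow> card (C - Y) \<le> card (D - Y)"
    using ex_has_least_nat[of Pr C0 "\<lambda>C. card (C - Y)"] by blast
  have Cc: "circuit E indep C" and CX': "C \<subseteq> X" and CY: "C \<inter> Y \<noteq> {}" and CmY: "C - Y \<noteq> {}"
    using PC unfolding Pr_def by auto
  have CE: "C \<subseteq> E" using CX' XE by blast
  have YE: "Y \<subseteq> E" using YX XE by blast
  have finC: "finite C" using finS CE by blast
  have finY: "finite Y" using finS YE by blast
  define P where "P = C - Y"
  define X' where "X' = Y \<union> P"
  have finP: "finite P" unfolding P_def using finC by blast
  have Pne: "P \<noteq> {}" unfolding P_def using CmY .
  have PY: "P \<inter> Y = {}" unfolding P_def by blast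
  have PC': "P \<subseteq> C" unfolding P_def by blast
  have X'X: "X' \<subseteq> X" unfolding X'_def P_def using YX CX' by blast
  have X'E: "X' \<subseteq> E" using X'X XE by blast
  have YX': "Y \<subset> X'" unfolding X'_def using Pne PY by blast
  have Cdep: "\<not> indep C" using Cc unfolding circuit_def by blast
  have Csub: "\<And>D. D \<subset> C \<Longrightarrow> indep D" using Cc unfolding circuit_def by blast
  have indCY: "indep (C \<inter> Y)" using Csub CmY by blast
  have KQ: "indep (K \<union> Q)" if K: "base_of indep Y K" and Q: "Q \<subset> P" for K Q
  proof (rule ccontr)
    assume dep: "\<not> indep (K \<union> Q)"
    have KY: "K \<subseteq> Y" "indep K" using K unfolding base_of_def by auto
    have "K \<union> Q \<subseteq> E" using KY YE Q PC' CE by blast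
    then obtain D where D: "D \<subseteq> K \<union> Q" "circuit E indep D" using dep_circuit dep by blast
    have Ddep: "\<not> indep D" using D unfolding circuit_def by blast
    have DQ: "D \<inter> Q \<noteq> {}"
    proof
      assume "D \<inter> Q = {}"
      hence "D \<subseteq> K" using D by blast
      thus False using indep_mono KY Ddep by blast
    qed
    show False
    proof (cases "D \<inter> Y = {}")
      case True
      hence "D \<subseteq> Q" using D KY by blast
      hence "D \<subset> C" using Q PC' by blast
      thus False using Csub Ddep by blast
    next
      case False
      have "Pr D" unfolding Pr_def
      proof (intro conjI)
        show "circuit E indep D" using D by blast
        show "D \<subseteq> X" using D KY YX Q PC' CX' by blast
        show "D \<inter> Y \<noteq> {}" using False .
        show "D - Y \<noteq> {}" using DQ Q PY by blast
      qed
      hence "card (C - Y) \<le> card (D - Y)" using min by blast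
      moreover have "D - Y \<subseteq> Q" using D KY by blast
      hence "card (D - Y) \<le> card Q" using finP Q finite_subset card_mono by (metis psubset_imp_subset)
      moreover have "card Q < card P" using psubset_card_mono[OF finP Q] .
      ultimately show False unfolding P_def by linarith
    qed
  qed
  have rank_up: "int (rank indep X') \<le> int (rank indep Y) + int (card P) - 1"
  proof -
    have "C \<inter> Y \<subseteq> X'" unfolding X'_def by blast
    then obtain J where J: "base_of indep X' J" "C \<inter> Y \<subseteq> J" using extend indCY by blast
    have JX': "J \<subseteq> X'" "indep J" using J unfolding base_of_def by auto
    have cJ: "card J = rank indep X'" using base_card J by blast
    have "indep (J \<inter> Y)" using indep_mono[OF JX'(2)] by blast
    hence "card (J \<inter> Y) \<le> rank indep Y" using rank_ge[of "J \<inter> Y" Y] by blast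
    moreover have "\<not> P \<subseteq> J"
    proof
      assume "P \<subseteq> J"
      hence "C \<subseteq> J" using J unfolding P_def by blast
      thus False using indep_mono JX' Cdep by blast
    qed
    hence "card (J \<inter> P) < card P" using finP by (meson Int_lower2 psubset_card_mono psubset_eq inf.absorb_iff2)
    moreover have "card J = card (J \<inter> Y) + card (J \<inter> P)"
    proof -
      have "J = (J \<inter> Y) \<union> (J \<inter> P)" using JX' unfolding X'_def by blast
      moreover have "finite (J \<inter> Y)" "finite (J \<inter> P)" using finY finP by auto
      moreover have "(J \<inter> Y) \<inter> (J \<inter> P) = {}" using PY by blast
      ultimately show ?thesis by (metis card_Un_disjoint)
    qed
    ultimately show ?thesis using cJ by linarith
  qed
  have low: "int (rank indep (X' - dl ends v)) \<ge> int (rank indep (Y - dl ends v)) + int (card P)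
              - int (max (card {g\<in>P. v \<in> ends g}) 1)" for v
  proof -
    obtain Q where Q: "Q \<subset> P" "Q \<inter> dl ends v = {}" "card Q + max (card {g\<in>P. v \<in> ends g}) 1 = card P"
    proof (cases "{g\<in>P. v \<in> ends g} = {}")
      case True
      obtain p where p: "p \<in> P" using Pne by blast
      have "P - {p} \<subset> P" using p by blast
      moreover have "(P - {p}) \<inter> dl ends v = {}" using True unfolding dl_def by blast
      moreover have "card (P - {p}) + max (card {g\<in>P. v \<in> ends g}) 1 = card P"
        using True p finP by (simp add: card_Diff_singleton) (metis Suc_pred card_gt_0_iff empty_iff)
      ultimately show ?thesis using that by blast
    next
      case False
      have eq: "{g\<in>P. v \<in> ends g} = P \<inter> dl ends v" unfolding dl_def by blast
      have "P - dl ends v \<subset> P" using False eq by blast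
      moreover have "(P - dl ends v) \<inter> dl ends v = {}" by blast
      moreover have "card (P - dl ends v) + max (card {g\<in>P. v \<in> ends g}) 1 = card P"
      proof -
        have "card {g\<in>P. v \<in> ends g} \<ge> 1" using False finP by (simp add: Suc_le_eq card_gt_0_iff)
        moreover have "card (P - dl ends v) + card (P \<inter> dl ends v) = card P"
          using card_Int_Diff[OF finP, of "dl ends v"] by linarith
        ultimately show ?thesis using eq by simp
      qed
      ultimately show ?thesis using that by blast
    qed
    obtain K0 where K0: "base_of indep (Y - dl ends v) K0" using base_exists by blast
    have K0Y: "K0 \<subseteq> Y - dl ends v" "indep K0" using K0 unfolding base_of_def by auto
    obtain K where K: "base_of indep Y K" "K0 \<subseteq> K" using extend[of K0 Y] K0Y by blast
    have "indep (K \<union> Q)" using KQ K Q by blast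
    hence ind: "indep (K0 \<union> Q)" using indep_mono K by blast
    have sub: "K0 \<union> Q \<subseteq> X' - dl ends v" using K0Y Q unfolding X'_def by blast
    have "card (K0 \<union> Q) = card K0 + card Q"
      using K0Y Q PY finY finP by (intro card_Un_disjoint) (auto intro: finite_subset)
    moreover have "card K0 = rank indep (Y - dl ends v)" using base_card K0 by blast
    moreover have "card (K0 \<union> Q) \<le> rank indep (X' - dl ends v)" using rank_ge ind sub by blast
    ultimately show ?thesis using Q(3) by linarith
  qed
  have two: "2 \<le> card (Vset ends P \<inter> Vset ends Y)" unfolding P_def using two_common Cc CY CmY by blast
  have VX': "Vset ends X' = Vset ends Y \<union> Vset ends P" unfolding X'_def Vset_def by blast
  have finVY: "finite (Vset ends Y)" using finVset YE by blast
  have finVP: "finite (Vset ends P)" using finVset PC' CE by blast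
  have finVX': "finite (Vset ends X')" using finVset X'E by blast
  have cardU: "card (Vset ends X') + card (Vset ends P \<inter> Vset ends Y) = card (Vset ends Y) + card (Vset ends P)"
    using card_Un_Int[OF finVY finVP] VX' by (simp add: Int_commute)
  have eE: "e \<in> E" using e YE by blast
  have "ends e \<subseteq> Vset ends X'" using endsV[of e X'] e YX' by blast
  hence n2: "2 \<le> card (Vset ends X')" using card_mono[OF finVX'] ends2[OF eE] by metis
  define rX where "rX = int (rank indep X')"
  define rY where "rY = int (rank indep Y)"
  define p where "p = int (card P)"
  define n where "n = int (card (Vset ends X'))"
  define d where "d v = int (max (card {g\<in>P. v \<in> ends g}) 1)" for v
  define h where "h v = rY - int (rank indep (Y - dl ends v))" for v
  have step1: "FF ends indep X' \<le> (\<Sum>v\<in>Vset ends X'. (rX - rY - p) + d v + h v)"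
    unfolding FF_def
  proof (rule sum_mono)
    fix v show "int (rank indep X') - int (rank indep (X' - dl ends v)) \<le> rX - rY - p + d v + h v"
      using low[of v] unfolding rX_def rY_def p_def d_def h_def by linarith
  qed
  have s1: "(\<Sum>v\<in>Vset ends X'. (rX - rY - p) + d v + h v) = n * (rX - rY - p) + (\<Sum>v\<in>Vset ends X'. d v) + (\<Sum>v\<in>Vset ends X'. h v)"
    unfolding n_def by (simp add: sum.distrib)
  have s2: "(\<Sum>v\<in>Vset ends X'. h v) = FF ends indep Y"
  proof -
    have "(\<Sum>v\<in>Vset ends X'. h v) = (\<Sum>v\<in>Vset ends Y. h v)"
    proof (rule sum.mono_neutral_right[OF finVX'])
      show "Vset ends Y \<subseteq> Vset ends X'" using VX' by blast
      show "\<forall>i\<in>Vset ends X' - Vset ends Y. h i = 0"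
      proof
        fix v assume v: "v \<in> Vset ends X' - Vset ends Y"
        have "Y - dl ends v = Y" using v unfolding dl_def Vset_def by blast
        thus "h v = 0" unfolding h_def rY_def by simp
      qed
    qed
    thus ?thesis unfolding FF_def h_def rY_def .
  qed
  have s3: "(\<Sum>v\<in>Vset ends X'. d v) = 2 * p + n - int (card (Vset ends P))"
  proof -
    have ok: "\<forall>g\<in>P. ends g \<subseteq> Vset ends X' \<and> card (ends g) = 2"
      using endsV[of _ X'] ends2 PC' CE unfolding X'_def by blast
    have VPs: "card (Vset ends P) \<le> card (Vset ends X')" using VX' card_mono[OF finVX'] by blast
    have "(\<Sum>v\<in>Vset ends X'. d v) = int (\<Sum>v\<in>Vset ends X'. max (card {g\<in>P. v \<in> ends g}) 1)"
      unfolding d_def by simp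
    also have "\<dots> = int (2 * card P + card (Vset ends X') - card (Vset ends P))"
      using sum_max1[OF finVX' finP ok] by simp
    also have "\<dots> = 2 * p + n - int (card (Vset ends P))"
      unfolding p_def n_def using VPs by simp
    finally show ?thesis .
  qed
  have gY': "FF ends indep Y \<le> 2 * (rY + 1) - int (card (Vset ends Y))"
    using gY unfolding good_def rY_def .
  have ru: "rX \<le> rY + p - 1" using rank_up unfolding rX_def rY_def p_def .
  define t where "t = rY + p - 1 - rX"
  have t0: "0 \<le> t" unfolding t_def using ru by linarith
  have n2': "2 \<le> n" unfolding n_def using n2 by simp
  have prod: "0 \<le> (n - 2) * t" using t0 n2' by simp
  have expand: "n * (rX - rY - p) = - ((n - 2) * t) - 2 * t - n" unfolding t_def by (simp add: algebra_simps)
  have cardU': "n + int (card (Vset ends P \<inter> Vset ends Y)) = int (card (Vset ends Y)) + int (card (Vset ends P))"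
    unfolding n_def using cardU by linarith
  have two': "2 \<le> int (card (Vset ends P \<inter> Vset ends Y))" using two by simp
  have "FF ends indep X' \<le> 2 * (rX + 1) - n"
    proof -
    have tt: "rX = rY + p - 1 - t" unfolding t_def by simp
    define q where "q = (n - 2) * t"
    have q0: "0 \<le> q" using prod unfolding q_def .
    have ex: "n * (rX - rY - p) = - q - 2 * t - n" using expand unfolding q_def .
    have "FF ends indep X' \<le> n * (rX - rY - p) + (\<Sum>v\<in>Vset ends X'. d v) + FF ends indep Y"
      using step1 s1 s2 by simp
    also have "\<dots> = - q - 2 * t - n + (2 * p + n - int (card (Vset ends P))) + FF ends indep Y"
      using ex s3 by simp
    also have "\<dots> \<le> 2 * (rX + 1) - n"
      using gY' q0 cardU' two' tt by (smt (verit))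
    finally show ?thesis .
  qed
  hence "good ends indep X'" unfolding good_def rX_def n_def .
  thus ?thesis using YX' X'X by blast
qed

lemma rank_empty: "rank indep {} = 0"
proof -
  have "base_of indep {} {}" unfolding base_of_def using indep_empty by blast
  thus ?thesis using base_card by fastforce
qed

lemma good_single: assumes eX: "e \<in> X" shows "good ends indep {e}"
proof -
  have eE: "e \<in> E" using eX XE by blast
  have Ve: "Vset ends {e} = ends e" unfolding Vset_def by simp
  have ind: "indep {e}"
  proof (rule ccontr)
    assume d: "\<not> indep {e}"
    have "circuit E indep {e}" unfolding circuit_def
    proof (intro conjI allI impI)
      fix D assume "D \<subset> {e}" hence "D = {}" by blast
      thus "indep D" using indep_empty by simp
    qed (use eE d in auto)
    hence "two_connected ends (Vset ends {e}) {e}" using C2 by blast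
    hence "3 \<le> card (ends e)" using Ve unfolding two_connected_def by simp
    thus False using ends2[OF eE] by simp
  qed
  have "base_of indep {e} {e}" unfolding base_of_def using ind by blast
  hence r1: "rank indep {e} = 1" using base_card by fastforce
  have "FF ends indep {e} = (\<Sum>v\<in>ends e. 1)"
    unfolding FF_def Ve
  proof (rule sum.cong)
    fix v assume "v \<in> ends e"
    hence "{e} - dl ends v = {}" unfolding dl_def by blast
    thus "int (rank indep {e}) - int (rank indep ({e} - dl ends v)) = 1" using r1 rank_empty by simp
  qed simp
  also have "\<dots> = 2" using ends2[OF eE] by simp
  finally show ?thesis unfolding good_def using r1 Ve ends2[OF eE] by simp
qed

lemma grow: "Y \<subseteq> X \<Longrightarrow> Y \<noteq> {} \<Longrightarrow> good ends indep Y \<Longrightarrow> good ends indep X"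
proof (induction "card (X - Y)" arbitrary: Y rule: less_induct)
  case less
  show ?case
  proof (cases "Y = X")
    case True then show ?thesis using less by simp
  next
    case False
    then obtain Y' where Y': "Y \<subset> Y'" "Y' \<subseteq> X" "good ends indep Y'"
      using ear_step[OF less.prems(1) less.prems(2) False less.prems(3)] by blast
    have finX: "finite X" using finS XE by blast
    have "X - Y' \<subset> X - Y" using Y' less.prems(1) by blast
    hence "card (X - Y') < card (X - Y)" using finX by (meson finite_Diff psubset_card_mono)
    thus ?thesis using less.hyps Y' less.prems(2) by blast
  qed
qed

lemma vertex_bound:
  "int (Min {deg ends B v |B. base_of indep X B}) \<le> int (rank indep X) - int (rank indep (X - dl ends v))"
proof -
  obtain K0 where K0: "base_of indep (X - dl ends v) K0" using base_exists by blast
  have K0X: "K0 \<subseteq> X - dl ends v" "indep K0" using K0 unfolding base_of_def by auto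
  obtain B where B: "base_of indep X B" "K0 \<subseteq> B" using extend[of K0 X] K0X by blast
  have BX: "B \<subseteq> X" "indep B" using B unfolding base_of_def by auto
  have finB: "finite B" using indep_fin BX by blast
  have cB: "card B = rank indep X" using base_card B by blast
  have cK: "card K0 = rank indep (X - dl ends v)" using base_card K0 by blast
  have "deg ends B v = card (B \<inter> dl ends v)" unfolding deg_def dl_def by (metis Collect_conj_eq Collect_mem_eq)
  moreover have "card B = card (B \<inter> dl ends v) + card (B - dl ends v)" using card_Int_Diff[OF finB] .
  moreover have "card K0 \<le> card (B - dl ends v)" using B K0X finB by (intro card_mono) auto
  ultimately have dB: "int (deg ends B v) \<le> int (rank indep X) - int (rank indep (X - dl ends v))"
    using cB cK by linarith
  have fin: "finite {deg ends B v |B. base_of indep X B}"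
  proof -
    have "{deg ends B v |B. base_of indep X B} \<subseteq> (\<lambda>B. deg ends B v) ` Pow X"
      unfolding base_of_def by blast
    moreover have "finite X" using finS XE by blast
    ultimately show ?thesis using finite_subset by blast
  qed
  have "Min {deg ends B v |B. base_of indep X B} \<le> deg ends B v" using Min_le[OF fin] B by blast
  thus ?thesis using dB by linarith
qed

lemma main:
  "int (\<Sum>v\<in>Vset ends X. Min {deg ends B v | B. base_of indep X B})
           \<le> 2 * (int (rank indep X) + 1) - int (card (Vset ends X))"
proof (cases "X = {}")
  case True
  hence "Vset ends X = {}" unfolding Vset_def by simp
  thus ?thesis by simp
next
  case False
  then obtain e where e: "e \<in> X" by blast
  have g: "good ends indep X" using grow[of "{e}"] good_single[OF e] e by blast
  have "int (\<Sum>v\<in>Vset ends X. Min {deg ends B v | B. base_of indep X B})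
      = (\<Sum>v\<in>Vset ends X. int (Min {deg ends B v | B. base_of indep X B}))" by simp
  also have "\<dots> \<le> FF ends indep X" unfolding FF_def by (rule sum_mono) (rule vertex_bound)
  finally show ?thesis using g unfolding good_def by linarith
qed

end


theorem lemma5p5:
  fixes V :: "'v set" and E :: "'e set" and ends :: "'e \<Rightarrow> 'v set"
    and indep :: "'e set \<Rightarrow> bool" and X :: "'e set"
  assumes "graph V E ends"
    and "matroid E indep"
    and "\<And>C. circuit E indep C \<Longrightarrow> two_connected ends (Vset ends C) C"
    and "connected_set E indep X"
  shows "int (\<Sum>v\<in>Vset ends X. Min {deg ends B v | B. base_of indep X B})
           \<le> 2 * (int (rank indep X) + 1) - int (card (Vset ends X))"
proof -
  interpret setting E indep V ends X
    using assms unfolding setting_def setting_axioms_def mat_def by blast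
  show ?thesis by (rule main)
qed

end
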